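(* Let $\mathcal{G}=(\mathcal{V},\mathcal{E})$ be connected, $c\in\mathbb{R}^n$, $\bar c=\frac1n\sum_ic_i$, and $\epsilon>0$. Set $x^0=c$ and for $t\ge0$ choose $e=(i,j)\in\mathcal{E}$ uniformly at random (independently across iterations) and set $x^{t+1}=x^t$ except: if $x_i^t\le x_j^t-\epsilon$ then $x_i^{t+1}=x_i^t+\epsilon/2$, $x_j^{t+1}=x_j^t-\epsilon/2$; if $x_j^t\le x_i^t-\epsilon$ then $x_i^{t+1}=x_i^t-\epsilon/2$, $x_j^{t+1}=x_j^t+\epsilon/2$. Let $\Delta^t(\epsilon)=\frac1m\big|\{(i,j)\in\mathcal{E}:|x_i^t-x_j^t|\ge\epsilon\}\big|$ and $\delta^k(\epsilon)=\frac1k\sum_{t=0}^{k-1}\mathbb{E}[\Delta^t(\epsilon)]$. Then for all $k\ge1$ $$\delta^k(\epsilon)\le\frac{2\|c-\bar c\mathbf{1}\|^2}{k\epsilon^2}.$$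
   Context: $\mathcal{G}$ is an undirected graph with vertices $\mathcal{V}=\{1,\dots,n\}$ and $m=|\mathcal{E}|$ edges, each edge $e=(i,j)$ having an arbitrary but fixed orientation. $\mathbf{1}$ is the all-ones vector and $\|\cdot\|$ the Euclidean norm. (The bound $2\|c-\bar c\mathbf 1\|^2$ equals $4(D(y^* )-D(y^0))$ for the dual function $D(y)=-(\mathbf{A}c)^\top y-\tfrac12\|\mathbf{A}^\top y\|^2$ with $y^0=0$, $\mathbf{A}$ the edge–vertex incidence matrix.) *)

theory Defs
  imports "HOL-Probability.Probability"
begin

text \<open>Vertices are 1..n; edges are ordered pairs (i,j) carrying the fixed orientation.\<close>

definition simple_oriented_graph :: "nat \<Rightarrow> (nat \<times> nat) set \<Rightarrow> bool" where
  "simple_oriented_graph n E \<longleftrightarrow>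
     E \<subseteq> {1..n} \<times> {1..n} \<and> (\<forall>(i,j)\<in>E. i \<noteq> j \<and> (j,i) \<notin> E)"

definition connected_graph :: "nat \<Rightarrow> (nat \<times> nat) set \<Rightarrow> bool" where
  "connected_graph n E \<longleftrightarrow>
     (\<forall>i\<in>{1..n}. \<forall>j\<in>{1..n}. (i,j) \<in> (E \<union> E\<inverse>)\<^sup>*)"

definition qstep :: "real \<Rightarrow> nat \<times> nat \<Rightarrow> (nat \<Rightarrow> real) \<Rightarrow> (nat \<Rightarrow> real)" where
  "qstep \<epsilon> e x = (case e of (i,j) \<Rightarrow>
     if x i \<le> x j - \<epsilon> then x(i := x i + \<epsilon>/2, j := x j - \<epsilon>/2)
     else if x j \<le> x i - \<epsilon> then x(i := x i - \<epsilon>/2, j := x j + \<epsilon>/2)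
     else x)"

primrec traj :: "(nat \<times> nat) set \<Rightarrow> real \<Rightarrow> (nat \<Rightarrow> real) \<Rightarrow> nat \<Rightarrow> (nat \<Rightarrow> real) pmf" where
  "traj E \<epsilon> c 0 = return_pmf c"
| "traj E \<epsilon> c (Suc t) = bind_pmf (traj E \<epsilon> c t) (\<lambda>x. map_pmf (\<lambda>e. qstep \<epsilon> e x) (pmf_of_set E))"

definition Delta :: "(nat \<times> nat) set \<Rightarrow> real \<Rightarrow> (nat \<Rightarrow> real) \<Rightarrow> real" where
  "Delta E \<epsilon> x = real (card {(i,j)\<in>E. \<bar>x i - x j\<bar> \<ge> \<epsilon>}) / real (card E)"

definition delta :: "(nat \<times> nat) set \<Rightarrow> real \<Rightarrow> (nat \<Rightarrow> real) \<Rightarrow> nat \<Rightarrow> real" where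
  "delta E \<epsilon> c k = (1 / real k) * (\<Sum>t<k. measure_pmf.expectation (traj E \<epsilon> c t) (Delta E \<epsilon>))"

end

theory Submission
  imports Defs
begin

definition W :: "nat \<Rightarrow> real \<Rightarrow> (nat \<Rightarrow> real) \<Rightarrow> real" where
  "W n m x = (\<Sum>i\<in>{1..n}. (x i - m)\<^sup>2)"

lemma sum_two:
  fixes g :: "nat \<Rightarrow> real"
  assumes "finite S" "i \<in> S" "j \<in> S" "i \<noteq> j"
  shows "sum g S = g i + g j + sum g (S - {i,j})"
proof -
  have "sum g S = g i + sum g (S - {i})" using assms by (simp add: sum.remove)
  moreover have "sum g (S - {i}) = g j + sum g (S - {i} - {j})"
    using assms by (intro sum.remove) auto
  moreover have "S - {i} - {j} = S - {i,j}" by auto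
  ultimately show ?thesis by simp
qed

lemma W_upd:
  assumes "i \<in> {1..n}" "j \<in> {1..n}" "i \<noteq> j"
  shows "W n m (x(i := a, j := b)) = W n m x - (x i - m)\<^sup>2 - (x j - m)\<^sup>2 + (a - m)\<^sup>2 + (b - m)\<^sup>2"
proof -
  have r: "(\<Sum>k\<in>{1..n} - {i,j}. ((x(i := a, j := b)) k - m)\<^sup>2) = (\<Sum>k\<in>{1..n} - {i,j}. (x k - m)\<^sup>2)"
    by (intro sum.cong) auto
  show ?thesis unfolding W_def
    using sum_two[OF _ assms, of "\<lambda>k. ((x(i := a, j := b)) k - m)\<^sup>2"]
          sum_two[OF _ assms, of "\<lambda>k. (x k - m)\<^sup>2"] r assms by simp
qed

lemma W_step:
  assumes "i \<in> {1..n}" "j \<in> {1..n}" "i \<noteq> j" "\<epsilon> > 0"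
  shows "W n m (qstep \<epsilon> (i,j) x) + \<epsilon>\<^sup>2/2 * (if \<bar>x i - x j\<bar> \<ge> \<epsilon> then 1 else 0) \<le> W n m x"
proof -
  consider (a) "x i \<le> x j - \<epsilon>" | (b) "\<not> x i \<le> x j - \<epsilon>" "x j \<le> x i - \<epsilon>"
    | (c) "\<not> x i \<le> x j - \<epsilon>" "\<not> x j \<le> x i - \<epsilon>" by blast
  then show ?thesis
  proof cases
    case a
    have "\<bar>x i - x j\<bar> \<ge> \<epsilon>" using a assms by auto
    moreover have "(x i + \<epsilon>/2 - m)\<^sup>2 + (x j - \<epsilon>/2 - m)\<^sup>2 - (x i - m)\<^sup>2 - (x j - m)\<^sup>2
        = \<epsilon> * (x i - x j) + \<epsilon>\<^sup>2/2" by (simp add: power2_eq_square algebra_simps)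
    moreover have "\<epsilon> * (x i - x j) \<le> - \<epsilon>\<^sup>2"
      using a assms mult_left_mono[of "x i - x j" "-\<epsilon>" \<epsilon>] by (simp add: power2_eq_square)
    ultimately show ?thesis using a assms by (simp add: qstep_def W_upd)
  next
    case b
    have "\<bar>x i - x j\<bar> \<ge> \<epsilon>" using b assms by auto
    moreover have "(x i - \<epsilon>/2 - m)\<^sup>2 + (x j + \<epsilon>/2 - m)\<^sup>2 - (x i - m)\<^sup>2 - (x j - m)\<^sup>2
        = \<epsilon> * (x j - x i) + \<epsilon>\<^sup>2/2" by (simp add: power2_eq_square algebra_simps)
    moreover have "\<epsilon> * (x j - x i) \<le> - \<epsilon>\<^sup>2"
      using b assms mult_left_mono[of "x j - x i" "-\<epsilon>" \<epsilon>] by (simp add: power2_eq_square)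
    ultimately show ?thesis using b assms by (simp add: qstep_def W_upd)
  next
    case c
    then show ?thesis by (auto simp: qstep_def)
  qed
qed


lemma exp_step:
  assumes G: "simple_oriented_graph n E" and ne: "E \<noteq> {}" and e: "\<epsilon> > 0"
  shows "measure_pmf.expectation (map_pmf (\<lambda>e. qstep \<epsilon> e x) (pmf_of_set E)) (W n m)
           + \<epsilon>\<^sup>2/2 * Delta E \<epsilon> x \<le> W n m x"
proof -
  have sub: "E \<subseteq> {1..n} \<times> {1..n}" and ij: "\<And>i j. (i,j) \<in> E \<Longrightarrow> i \<noteq> j"
    using G unfolding simple_oriented_graph_def by auto
  have fin: "finite E" using sub by (rule finite_subset) auto
  let ?ind = "\<lambda>e. (if \<epsilon> \<le> \<bar>x (fst e) - x (snd e)\<bar> then 1 else 0) :: real"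
  have cardE: "real (card E) > 0" using fin ne by (simp add: card_gt_0_iff)
  have D: "Delta E \<epsilon> x = (\<Sum>e\<in>E. ?ind e) / real (card E)"
  proof -
    have "(\<Sum>e\<in>E. ?ind e) = real (card {e\<in>E. \<epsilon> \<le> \<bar>x (fst e) - x (snd e)\<bar>})"
      using fin by (simp add: sum.If_cases Int_def)
    moreover have "{e\<in>E. \<epsilon> \<le> \<bar>x (fst e) - x (snd e)\<bar>} = {(i,j)\<in>E. \<bar>x i - x j\<bar> \<ge> \<epsilon>}" by auto
    ultimately show ?thesis unfolding Delta_def by simp
  qed
  have EW: "measure_pmf.expectation (map_pmf (\<lambda>e. qstep \<epsilon> e x) (pmf_of_set E)) (W n m)
      = (\<Sum>e\<in>E. W n m (qstep \<epsilon> e x)) / real (card E)"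
    using fin ne by (simp add: integral_pmf_of_set)
  have "(\<Sum>e\<in>E. W n m (qstep \<epsilon> e x) + \<epsilon>\<^sup>2/2 * ?ind e) \<le> (\<Sum>e\<in>E. W n m x)"
  proof (rule sum_mono)
    fix e assume "e \<in> E"
    then obtain i j where eq: "e = (i,j)" "(i,j) \<in> E" by (cases e) auto
    show "W n m (qstep \<epsilon> e x) + \<epsilon>\<^sup>2/2 * ?ind e \<le> W n m x"
      using W_step[of i n j \<epsilon> m x] eq sub ij e by auto
  qed
  hence "(\<Sum>e\<in>E. W n m (qstep \<epsilon> e x)) + \<epsilon>\<^sup>2/2 * (\<Sum>e\<in>E. ?ind e) \<le> real (card E) * W n m x"
    by (simp add: sum.distrib sum_distrib_left)
  hence "((\<Sum>e\<in>E. W n m (qstep \<epsilon> e x)) + \<epsilon>\<^sup>2/2 * (\<Sum>e\<in>E. ?ind e)) / real (card E) \<le> W n m x"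
    using cardE by (simp add: divide_le_eq mult.commute)
  thus ?thesis unfolding EW D by (simp add: add_divide_distrib)
qed

lemma finite_traj:
  assumes "finite E" "E \<noteq> {}"
  shows "finite (set_pmf (traj E \<epsilon> c t))"
proof (induction t)
  case 0 then show ?case by simp
next
  case (Suc t)
  have "finite (set_pmf (pmf_of_set E))"
    using assms by simp
  then show ?case using Suc by simp
qed


lemma one_step:
  assumes G: "simple_oriented_graph n E" and ne: "E \<noteq> {}" and e: "\<epsilon> > 0"
  shows "measure_pmf.expectation (traj E \<epsilon> c (Suc t)) (W n m)
     + \<epsilon>\<^sup>2/2 * measure_pmf.expectation (traj E \<epsilon> c t) (Delta E \<epsilon>)
     \<le> measure_pmf.expectation (traj E \<epsilon> c t) (W n m)"
proof -
  have sub: "E \<subseteq> {1..n} \<times> {1..n}" using G unfolding simple_oriented_graph_def by auto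
  have fin: "finite E" using sub by (rule finite_subset) auto
  define S where "S = set_pmf (traj E \<epsilon> c t)"
  have fS: "finite S" unfolding S_def using finite_traj[OF fin ne] .
  have fstep: "finite (set_pmf (map_pmf (\<lambda>e. qstep \<epsilon> e x) (pmf_of_set E)))" for x
    using fin ne by simp
  have A: "measure_pmf.expectation (traj E \<epsilon> c (Suc t)) (W n m) =
    (\<Sum>a\<in>S. pmf (traj E \<epsilon> c t) a * measure_pmf.expectation (map_pmf (\<lambda>e. qstep \<epsilon> e a) (pmf_of_set E)) (W n m))"
    using pmf_expectation_bind[OF fS fstep, of "traj E \<epsilon> c t" _ "W n m"] by (simp add: S_def)
  have B: "measure_pmf.expectation (traj E \<epsilon> c t) f = (\<Sum>a\<in>S. pmf (traj E \<epsilon> c t) a * f a)" for f :: "_ \<Rightarrow> real"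
    using integral_measure_pmf[OF fS, of "traj E \<epsilon> c t" f] by (simp add: S_def)
  have "(\<Sum>a\<in>S. pmf (traj E \<epsilon> c t) a * measure_pmf.expectation (map_pmf (\<lambda>e. qstep \<epsilon> e a) (pmf_of_set E)) (W n m))
       + \<epsilon>\<^sup>2/2 * (\<Sum>a\<in>S. pmf (traj E \<epsilon> c t) a * Delta E \<epsilon> a)
     = (\<Sum>a\<in>S. pmf (traj E \<epsilon> c t) a * (measure_pmf.expectation (map_pmf (\<lambda>e. qstep \<epsilon> e a) (pmf_of_set E)) (W n m)
       + \<epsilon>\<^sup>2/2 * Delta E \<epsilon> a))"
    by (simp add: sum.distrib sum_distrib_left algebra_simps)
  also have "\<dots> \<le> (\<Sum>a\<in>S. pmf (traj E \<epsilon> c t) a * W n m a)"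
    by (intro sum_mono mult_left_mono exp_step[OF G ne e]) simp
  finally show ?thesis unfolding A B .
qed

lemma W_nonneg: "W n m x \<ge> 0" unfolding W_def by (intro sum_nonneg) simp

lemma accum:
  assumes G: "simple_oriented_graph n E" and ne: "E \<noteq> {}" and e: "\<epsilon> > 0"
  shows "measure_pmf.expectation (traj E \<epsilon> c k) (W n m)
     + \<epsilon>\<^sup>2/2 * (\<Sum>t<k. measure_pmf.expectation (traj E \<epsilon> c t) (Delta E \<epsilon>)) \<le> W n m c"
proof (induction k)
  case 0 then show ?case by simp
next
  case (Suc k)
  then show ?case using one_step[OF G ne e, of c k m] by (simp add: algebra_simps)
qed

theorem mainTheorem20:
  fixes n :: nat and E :: "(nat \<times> nat) set" and c :: "nat \<Rightarrow> real" and \<epsilon> :: real and k :: nat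
  assumes "simple_oriented_graph n E" and "connected_graph n E" and "E \<noteq> {}"
    and "\<epsilon> > 0" and "k \<ge> 1"
  shows "delta E \<epsilon> c k \<le>
    2 * (\<Sum>i\<in>{1..n}. (c i - (\<Sum>j\<in>{1..n}. c j) / real n)\<^sup>2) / (real k * \<epsilon>\<^sup>2)"
proof -
  define m where "m = (\<Sum>j\<in>{1..n}. c j) / real n"
  define s where "s = (\<Sum>t<k. measure_pmf.expectation (traj E \<epsilon> c t) (Delta E \<epsilon>))"
  have nn: "measure_pmf.expectation (traj E \<epsilon> c k) (W n m) \<ge> 0"
    by (intro integral_nonneg_AE) (simp add: W_nonneg)
  have "\<epsilon>\<^sup>2/2 * s \<le> W n m c" using accum[OF assms(1,3,4), of c k m] nn unfolding s_def by linarith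
  hence s: "s \<le> 2 * W n m c / \<epsilon>\<^sup>2" using assms(4) by (simp add: field_simps)
  have kp: "real k > 0" using assms(5) by simp
  have "delta E \<epsilon> c k = s / real k" unfolding delta_def s_def by simp
  also have "\<dots> \<le> (2 * W n m c / \<epsilon>\<^sup>2) / real k" using divide_right_mono[OF s, of "real k"] kp by simp
  also have "\<dots> = 2 * W n m c / (real k * \<epsilon>\<^sup>2)" by simp
  finally show ?thesis unfolding W_def m_def .
qed

end
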